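(* For all $t,s\in\Lambda^\infty$: if $t\to^\infty_\beta s$ and $t$ has a head normal form, then $s$ has a head normal form.
   Context: Fix an infinite set $V$ of variables and a set $C$ of constants with $V\cap C=\emptyset$, containing a distinguished constant $\bot$. $\Lambda^\infty$ is the set of infinitary lambda-terms: all finite and infinite terms generated coinductively by $t ::= c\mid x\mid t\,t\mid\lambda x.t$, identified up to $\alpha$-equivalence; $s[t/x]$ is capture-avoiding substitution; an atom is a variable or constant. $\to_\beta$ is the compatible closure of $\{((\lambda x.s)t,s[t/x])\}$, i.e. the least relation containing these pairs and closed under $s\to s'\Rightarrow st\to s't,\ ts\to ts',\ \lambda x.s\to\lambda x.s'$; $\to^*_\beta$ is its reflexive-transitive closure. A term is in head normal form (hnf) if it is $\lambda x_1\ldots x_m.\,a\,t_1\ldots t_n$ ($m,n\ge0$, $a$ an atom, $a\not\equiv\bot$); $t$ has a hnf if $t\to^*_\beta t'$ for some $t'$ in hnf. The infinitary closure $\to^\infty_\beta$ is the greatest relation such that whenever $s\to^\infty_\beta t$: $t\equiv a$ is an atom and $s\to^*_\beta a$; or $t\equiv t_1't_2'$, $s\to^*_\beta t_1t_2$ and $t_i\to^\infty_\beta t_i'$; or $t\equiv\lambda x.r'$, $s\to^*_\beta\lambda x.r$ and $r\to^\infty_\beta r'$. *)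

theory Defs
  imports Main "HOL-Library.BNF_Corec"
begin

text \<open>Infinitary lambda terms (finite and infinite), with de Bruijn indices for variables,
  so that syntactic equality is alpha-equivalence. 'c is the type of constants.\<close>

codatatype 'c lterm = Cst 'c | Var nat | App "'c lterm" "'c lterm" | Lam "'c lterm"

primcorec lift :: "nat \<Rightarrow> 'c lterm \<Rightarrow> 'c lterm" where
  "lift k t = (case t of
      Cst c \<Rightarrow> Cst c
    | Var n \<Rightarrow> Var (if n < k then n else Suc n)
    | App s u \<Rightarrow> App (lift k s) (lift k u)
    | Lam s \<Rightarrow> Lam (lift (Suc k) s))"

corec subst :: "nat \<Rightarrow> 'c lterm \<Rightarrow> 'c lterm \<Rightarrow> 'c lterm" where
  "subst k u t = (case t of
      Cst c \<Rightarrow> Cst c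
    | Var n \<Rightarrow> (if n = k then u else Var (if n < k then n else n - 1))
    | App s r \<Rightarrow> App (subst k u s) (subst k u r)
    | Lam s \<Rightarrow> Lam (subst (Suc k) (lift 0 u) s))"

inductive beta :: "'c lterm \<Rightarrow> 'c lterm \<Rightarrow> bool" where
  root: "beta (App (Lam s) t) (subst 0 t s)"
| appL: "beta s s' \<Longrightarrow> beta (App s t) (App s' t)"
| appR: "beta s s' \<Longrightarrow> beta (App t s) (App t s')"
| lam: "beta s s' \<Longrightarrow> beta (Lam s) (Lam s')"

abbreviation beta_star :: "'c lterm \<Rightarrow> 'c lterm \<Rightarrow> bool" where
  "beta_star \<equiv> beta\<^sup>*\<^sup>*"

definition lams :: "nat \<Rightarrow> 'c lterm \<Rightarrow> 'c lterm" where
  "lams m t = (Lam ^^ m) t"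

definition apps :: "'c lterm \<Rightarrow> 'c lterm list \<Rightarrow> 'c lterm" where
  "apps h ts = foldl App h ts"

definition is_atom :: "'c lterm \<Rightarrow> bool" where
  "is_atom a \<longleftrightarrow> (\<exists>n. a = Var n) \<or> (\<exists>c. a = Cst c)"

text \<open>Head normal form relative to the distinguished constant cbot (the paper's bottom).\<close>
definition hnf :: "'c \<Rightarrow> 'c lterm \<Rightarrow> bool" where
  "hnf cbot t \<longleftrightarrow> (\<exists>m a ts. t = lams m (apps a ts) \<and> is_atom a \<and> a \<noteq> Cst cbot)"

definition has_hnf :: "'c \<Rightarrow> 'c lterm \<Rightarrow> bool" where
  "has_hnf cbot t \<longleftrightarrow> (\<exists>t'. beta_star t t' \<and> hnf cbot t')"

coinductive beta_inf :: "'c lterm \<Rightarrow> 'c lterm \<Rightarrow> bool" where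
  atom: "is_atom a \<Longrightarrow> beta_star s a \<Longrightarrow> beta_inf s a"
| app: "beta_star s (App t1 t2) \<Longrightarrow> beta_inf t1 t1' \<Longrightarrow> beta_inf t2 t2' \<Longrightarrow> beta_inf s (App t1' t2')"
| lam: "beta_star s (Lam r) \<Longrightarrow> beta_inf r r' \<Longrightarrow> beta_inf s (Lam r')"

end

theory Submission
  imports Defs "HOL-Library.Multiset"
begin

datatype ty = Base | Arr "ty multiset" ty

type_synonym ctx = "nat \<Rightarrow> ty multiset"
definition cempty :: ctx where "cempty = (\<lambda>_. {#})"
definition cadd :: "ctx \<Rightarrow> ctx \<Rightarrow> ctx" where "cadd G D = (\<lambda>i. G i + D i)"
definition csing :: "nat \<Rightarrow> ty \<Rightarrow> ctx" where "csing x T = (\<lambda>i. if i = x then {#T#} else {#})"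
definition cdrop :: "nat \<Rightarrow> ctx \<Rightarrow> ctx" where "cdrop k G = (\<lambda>i. if i < k then G i else G (Suc i))"
definition cins :: "nat \<Rightarrow> ctx \<Rightarrow> ctx" where "cins k G = (\<lambda>i. if i < k then G i else if i = k then {#} else G (i - 1))"
definition ctl :: "ctx \<Rightarrow> ctx" where "ctl G = (\<lambda>i. G (Suc i))"
lemmas ctx_defs = cempty_def cadd_def csing_def cdrop_def cins_def ctl_def

inductive tj :: "'c \<Rightarrow> ctx \<Rightarrow> 'c lterm \<Rightarrow> ty \<Rightarrow> nat \<Rightarrow> bool"
  and tjs :: "'c \<Rightarrow> ctx \<Rightarrow> 'c lterm \<Rightarrow> ty multiset \<Rightarrow> nat \<Rightarrow> bool"
  for cb where
  tVar: "tj cb (csing x T) (Var x) T 1"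
| tCst: "c \<noteq> cb \<Longrightarrow> tj cb cempty (Cst c) T 1"
| tLam: "tj cb G t T n \<Longrightarrow> tj cb (ctl G) (Lam t) (Arr (G 0) T) (Suc n)"
| tApp: "tj cb G t (Arr M T) n \<Longrightarrow> tjs cb D u M m \<Longrightarrow> tj cb (cadd G D) (App t u) T (Suc (n + m))"
| sNil: "tjs cb cempty u {#} 0"
| sCons: "tjs cb G u M n \<Longrightarrow> tj cb D u T m \<Longrightarrow> tjs cb (cadd G D) u (add_mset T M) (n + m)"

inductive_cases tj_VarE: "tj cb G (Var x) T n"
inductive_cases tj_CstE: "tj cb G (Cst c) T n"
inductive_cases tj_LamE: "tj cb G (Lam t) T n"
inductive_cases tj_AppE: "tj cb G (App t u) T n"
inductive_cases tjs_emptyE: "tjs cb G u {#} n"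
inductive_cases tjs_addE: "tjs cb G u (add_mset T M) n"

lemma cadd_empty[simp]: "cadd cempty D = D" "cadd D cempty = D"
  by (auto simp: ctx_defs)

lemma sCons': "tjs cb G u M n \<Longrightarrow> tj cb D u T m \<Longrightarrow> G' = cadd G D \<Longrightarrow> M' = add_mset T M \<Longrightarrow> n' = n + m \<Longrightarrow> tjs cb G' u M' n'"
  using sCons[of cb G u M n D T m] by simp

lemma tjs_empty_iff: "tjs cb G u {#} n \<longleftrightarrow> G = cempty \<and> n = 0"
  by (auto elim: tjs_emptyE intro: tj_tjs.sNil)

lemma tjs_single: "tjs cb G u {#T#} n \<Longrightarrow> tj cb G u T n"
  by (erule tjs_addE) (auto simp: tjs_empty_iff)

lemma tj_tjs_single: "tj cb G u T n \<Longrightarrow> tjs cb G u {#T#} n"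
  by (rule sCons'[OF sNil]) auto

lemma tjs_union_aux:
  shows "tj cb G t T n \<Longrightarrow> True"
    and "tjs cb D2 u N m2 \<Longrightarrow> (\<forall>D1 M m1. tjs cb D1 u M m1 \<longrightarrow> tjs cb (cadd D1 D2) u (M + N) (m1 + m2))"
proof (induct rule: tj_tjs.inducts)
  case (sCons G u M n D T m)
  show ?case
  proof (intro allI impI)
    fix D1 M1 m1 assume "tjs cb D1 u M1 m1"
    then have "tjs cb (cadd D1 G) u (M1 + M) (m1 + n)" using sCons(2) by blast
    then show "tjs cb (cadd D1 (cadd G D)) u (M1 + add_mset T M) (m1 + (n + m))"
      by (rule sCons'[OF _ sCons(3)]) (auto simp: ctx_defs add.assoc)
  qed
qed auto

lemma tjs_union: "tjs cb D1 u M m1 \<Longrightarrow> tjs cb D2 u N m2 \<Longrightarrow> tjs cb (cadd D1 D2) u (M + N) (m1 + m2)"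
  using tjs_union_aux(2)[of cb D2 u N m2] by blast

lemma add_mset_eq_plus:
  assumes "add_mset T K = M + N" shows "(\<exists>M0. M = add_mset T M0 \<and> K = M0 + N) \<or> (\<exists>N0. N = add_mset T N0 \<and> K = M + N0)"
proof (cases "T \<in># M")
  case True
  then obtain M0 where "M = add_mset T M0" by (meson multi_member_split)
  then show ?thesis using assms by auto
next
  case False
  then have "T \<in># N" using assms by (metis union_iff union_single_eq_member)
  then obtain N0 where "N = add_mset T N0" by (meson multi_member_split)
  then show ?thesis using assms by auto
qed

lemma tjs_split_aux:
  shows "tj cb G t T n \<Longrightarrow> True"
    and "tjs cb D u K m \<Longrightarrow> (\<forall>M N. K = M + N \<longrightarrow> (\<exists>D1 D2 m1 m2. D = cadd D1 D2 \<and> m = m1 + m2 \<and> tjs cb D1 u M m1 \<and> tjs cb D2 u N m2))"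
proof (induct rule: tj_tjs.inducts)
  case (sNil u)
  then show ?case by (auto intro!: exI[of _ cempty] simp: tjs_empty_iff)
next
  case (sCons G u K n D T m)
  show ?case
  proof (intro allI impI)
    fix M N assume e: "add_mset T K = M + N"
    from add_mset_eq_plus[OF e] show "\<exists>D1 D2 m1 m2. cadd G D = cadd D1 D2 \<and> n + m = m1 + m2 \<and> tjs cb D1 u M m1 \<and> tjs cb D2 u N m2"
    proof
      assume "\<exists>M0. M = add_mset T M0 \<and> K = M0 + N"
      then obtain M0 where M: "M = add_mset T M0" "K = M0 + N" by blast
      with sCons(2) obtain D1 D2 m1 m2 where "G = cadd D1 D2" "n = m1 + m2" "tjs cb D1 u M0 m1" "tjs cb D2 u N m2" by blast
      then show ?thesis using sCons(3) M
        by (intro exI[of _ "cadd D1 D"] exI[of _ D2] exI[of _ "m1 + m"] exI[of _ m2])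
           (auto intro: sCons'[OF _ sCons(3)] simp: ctx_defs fun_eq_iff ac_simps)
    next
      assume "\<exists>N0. N = add_mset T N0 \<and> K = M + N0"
      then obtain N0 where N: "N = add_mset T N0" "K = M + N0" by blast
      with sCons(2) obtain D1 D2 m1 m2 where "G = cadd D1 D2" "n = m1 + m2" "tjs cb D1 u M m1" "tjs cb D2 u N0 m2" by blast
      then show ?thesis using sCons(3) N
        by (intro exI[of _ D1] exI[of _ "cadd D2 D"] exI[of _ m1] exI[of _ "m2 + m"])
           (auto intro: sCons'[OF _ sCons(3)] simp: ctx_defs fun_eq_iff ac_simps)
    qed
  qed
qed auto

lemma tjs_split: "tjs cb D u (M + N) m \<Longrightarrow> \<exists>D1 D2 m1 m2. D = cadd D1 D2 \<and> m = m1 + m2 \<and> tjs cb D1 u M m1 \<and> tjs cb D2 u N m2"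
  using tjs_split_aux(2)[of cb D u "M+N" m] by blast


lemma lift_simps[simp]:
  "lift k (Cst c) = Cst c"
  "lift k (Var x) = Var (if x < k then x else Suc x)"
  "lift k (App s u) = App (lift k s) (lift k u)"
  "lift k (Lam s) = Lam (lift (Suc k) s)"
  by (simp_all add: lift.code)

lemma subst_simps[simp]:
  "subst k u (Cst c) = Cst c"
  "subst k u (Var x) = (if x = k then u else Var (if x < k then x else x - 1))"
  "subst k u (App s r) = App (subst k u s) (subst k u r)"
  "subst k u (Lam s) = Lam (subst (Suc k) (lift 0 u) s)"
  by (simp_all add: subst.code)

lemma tVar': "G = csing x T \<Longrightarrow> n = 1 \<Longrightarrow> tj cb G (Var x) T n"
  using tVar by simp
lemma tCst': "c \<noteq> cb \<Longrightarrow> G = cempty \<Longrightarrow> n = 1 \<Longrightarrow> tj cb G (Cst c) T n"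
  using tCst by simp
lemma tLam': "tj cb G t T n \<Longrightarrow> G' = ctl G \<Longrightarrow> S = Arr (G 0) T \<Longrightarrow> n' = Suc n \<Longrightarrow> tj cb G' (Lam t) S n'"
  using tLam by simp
lemma tApp': "tj cb G t (Arr M T) n \<Longrightarrow> tjs cb D u M m \<Longrightarrow> G' = cadd G D \<Longrightarrow> n' = Suc (n + m) \<Longrightarrow> tj cb G' (App t u) T n'"
  using tApp by simp
lemma sNil': "G = cempty \<Longrightarrow> M = {#} \<Longrightarrow> n = 0 \<Longrightarrow> tjs cb G u M n"
  using sNil by simp

lemma tj_lift:
  fixes cb :: 'c
  shows "tj cb G u T n \<Longrightarrow> (\<forall>k. tj cb (cins k G) (lift k u) T n)"
    and "tjs cb G u M n \<Longrightarrow> (\<forall>k. tjs cb (cins k G) (lift k u) M n)"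
proof (induct rule: tj_tjs.inducts)
  case (tVar x T)
  then show ?case by (auto intro!: tVar' simp: ctx_defs fun_eq_iff)
next
  case (tCst c T)
  then show ?case by (auto intro!: tCst' simp: ctx_defs fun_eq_iff)
next
  case (tLam G t T n)
  show ?case
  proof
    fix k
    show "tj cb (cins k (ctl G)) (lift k (Lam t)) (Arr (G 0) T) (Suc n)"
      using tLam(2) by (auto intro!: tLam' simp: ctx_defs fun_eq_iff)
  qed
next
  case (tApp G t M T n D u m)
  show ?case
  proof
    fix k
    show "tj cb (cins k (cadd G D)) (lift k (App t u)) T (Suc (n + m))"
      by (simp, rule tApp'[OF tApp(2)[rule_format, of k] tApp(4)[rule_format, of k]]) (auto simp: ctx_defs fun_eq_iff)
  qed
next
  case (sNil u)
  then show ?case by (auto intro!: sNil' simp: ctx_defs fun_eq_iff)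
next
  case (sCons G u M n D T m)
  show ?case
  proof
    fix k
    show "tjs cb (cins k (cadd G D)) (lift k u) (add_mset T M) (n + m)"
      by (rule sCons'[OF sCons(2)[rule_format, of k] sCons(4)[rule_format, of k]]) (auto simp: ctx_defs fun_eq_iff)
  qed
qed

lemma tj_unlift:
  fixes cb :: 'c
  shows "tj cb G s T n \<Longrightarrow> (\<forall>k v. s = lift k v \<longrightarrow> G k = {#} \<and> tj cb (cdrop k G) v T n)"
    and "tjs cb G s M n \<Longrightarrow> (\<forall>k v. s = lift k v \<longrightarrow> G k = {#} \<and> tjs cb (cdrop k G) v M n)"
proof (induct rule: tj_tjs.inducts)
  case (tVar x T)
  show ?case
  proof (intro allI impI)
    fix k and v :: "'c lterm" assume "Var x = lift k v"
    then obtain j where "v = Var j" "x = (if j < k then j else Suc j)" by (cases v) auto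
    then show "csing x T k = {#} \<and> tj cb (cdrop k (csing x T)) v T 1"
      by (auto intro!: tVar' simp: ctx_defs fun_eq_iff)
  qed
next
  case (tCst c T)
  show ?case
  proof (intro allI impI)
    fix k and v :: "'c lterm" assume "Cst c = lift k v"
    then have "v = Cst c" by (cases v) auto
    then show "cempty k = {#} \<and> tj cb (cdrop k cempty) v T 1"
      using tCst by (auto intro!: tCst' simp: ctx_defs fun_eq_iff)
  qed
next
  case (tLam G t T n)
  show ?case
  proof (intro allI impI)
    fix k and v :: "'c lterm" assume "Lam t = lift k v"
    then obtain v' where v: "v = Lam v'" "t = lift (Suc k) v'" by (cases v) auto
    with tLam(2) have "G (Suc k) = {#}" "tj cb (cdrop (Suc k) G) v' T n" by auto
    then show "ctl G k = {#} \<and> tj cb (cdrop k (ctl G)) v (Arr (G 0) T) (Suc n)"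
      using v by (auto intro!: tLam' simp: ctx_defs fun_eq_iff)
  qed
next
  case (tApp G t M T n D u m)
  show ?case
  proof (intro allI impI)
    fix k and v :: "'c lterm" assume "App t u = lift k v"
    then obtain v1 v2 where v: "v = App v1 v2" "t = lift k v1" "u = lift k v2" by (cases v) auto
    with tApp(2,4) have h: "G k = {#}" "tj cb (cdrop k G) v1 (Arr M T) n" "D k = {#}" "tjs cb (cdrop k D) v2 M m" by auto
    have "tj cb (cdrop k (cadd G D)) (App v1 v2) T (Suc (n + m))"
      by (rule tApp'[OF h(2) h(4)]) (auto simp: ctx_defs fun_eq_iff)
    then show "cadd G D k = {#} \<and> tj cb (cdrop k (cadd G D)) v T (Suc (n + m))"
      using v h by (simp add: cadd_def)
  qed
next
  case (sNil u)
  then show ?case by (auto intro!: sNil' simp: ctx_defs fun_eq_iff)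
next
  case (sCons G u M n D T m)
  show ?case
  proof (intro allI impI)
    fix k and v :: "'c lterm" assume e: "u = lift k v"
    with sCons(2,4) have h: "G k = {#}" "tjs cb (cdrop k G) v M n" "D k = {#}" "tj cb (cdrop k D) v T m" by auto
    have "tjs cb (cdrop k (cadd G D)) v (add_mset T M) (n + m)"
      by (rule sCons'[OF h(2) h(4)]) (auto simp: ctx_defs fun_eq_iff)
    then show "cadd G D k = {#} \<and> tjs cb (cdrop k (cadd G D)) v (add_mset T M) (n + m)"
      using h by (simp add: cadd_def)
  qed
qed


lemma tj_subst:
  fixes cb :: 'c
  shows "tj cb G b T n \<Longrightarrow> (\<forall>k (v::'c lterm) E p. tjs cb E v (G k) p \<longrightarrow>
            (\<exists>n'. tj cb (cadd (cdrop k G) E) (subst k v b) T n' \<and> n' + size (G k) = n + p))"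
    and "tjs cb G b M n \<Longrightarrow> (\<forall>k (v::'c lterm) E p. tjs cb E v (G k) p \<longrightarrow>
            (\<exists>n'. tjs cb (cadd (cdrop k G) E) (subst k v b) M n' \<and> n' + size (G k) = n + p))"
proof (induct rule: tj_tjs.inducts)
  case (tVar x T)
  show ?case
  proof (intro allI impI)
    fix k and v :: "'c lterm" and E p assume h: "tjs cb E v (csing x T k) p"
    show "\<exists>n'. tj cb (cadd (cdrop k (csing x T)) E) (subst k v (Var x)) T n' \<and> n' + size (csing x T k) = 1 + p"
    proof (cases "x = k")
      case True
      then have "tj cb E v T p" using h by (auto simp: csing_def intro: tjs_single)
      moreover have "cdrop k (csing x T) = cempty" using True by (auto simp: ctx_defs fun_eq_iff)
      ultimately show ?thesis using True by (auto simp: csing_def)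
    next
      case False
      then have "E = cempty" "p = 0" using h by (auto simp: csing_def tjs_empty_iff)
      moreover have "tj cb (cdrop k (csing x T)) (Var (if x < k then x else x - 1)) T 1"
        by (rule tVar') (use False in \<open>auto simp: ctx_defs fun_eq_iff\<close>)
      ultimately show ?thesis using False by (auto simp: csing_def)
    qed
  qed
next
  case (tCst c T)
  show ?case
  proof (intro allI impI)
    fix k and v :: "'c lterm" and E p assume h: "tjs cb E v (cempty k) p"
    then have "E = cempty" "p = 0" by (auto simp: cempty_def tjs_empty_iff)
    then show "\<exists>n'. tj cb (cadd (cdrop k cempty) E) (subst k v (Cst c)) T n' \<and> n' + size (cempty k) = 1 + p"
      using tCst by (auto intro!: tCst' simp: ctx_defs fun_eq_iff)
  qed
next
  case (tLam G t T n)
  show ?case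
  proof (intro allI impI)
    fix k and v :: "'c lterm" and E p assume h: "tjs cb E v (ctl G k) p"
    then have "tjs cb (cins 0 E) (lift 0 v) (G (Suc k)) p" using tj_lift(2)[of cb E v "G (Suc k)" p] by (auto simp: ctl_def)
    with tLam(2) obtain n' where n': "tj cb (cadd (cdrop (Suc k) G) (cins 0 E)) (subst (Suc k) (lift 0 v) t) T n'"
      "n' + size (G (Suc k)) = n + p" by blast
    have "tj cb (cadd (cdrop k (ctl G)) E) (Lam (subst (Suc k) (lift 0 v) t)) (Arr (G 0) T) (Suc n')"
      by (rule tLam'[OF n'(1)]) (auto simp: ctx_defs fun_eq_iff)
    then show "\<exists>n'. tj cb (cadd (cdrop k (ctl G)) E) (subst k v (Lam t)) (Arr (G 0) T) n' \<and> n' + size (ctl G k) = Suc n + p"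
      using n'(2) by (auto simp: ctl_def)
  qed
next
  case (tApp G t M T n D u m)
  show ?case
  proof (intro allI impI)
    fix k and v :: "'c lterm" and E p assume h: "tjs cb E v (cadd G D k) p"
    then obtain E1 E2 p1 p2 where E: "E = cadd E1 E2" "p = p1 + p2" "tjs cb E1 v (G k) p1" "tjs cb E2 v (D k) p2"
      using tjs_split by (fastforce simp: cadd_def)
    from tApp(2) E(3) obtain n1 where n1: "tj cb (cadd (cdrop k G) E1) (subst k v t) (Arr M T) n1" "n1 + size (G k) = n + p1" by blast
    from tApp(4) E(4) obtain n2 where n2: "tjs cb (cadd (cdrop k D) E2) (subst k v u) M n2" "n2 + size (D k) = m + p2" by blast
    have "tj cb (cadd (cdrop k (cadd G D)) E) (App (subst k v t) (subst k v u)) T (Suc (n1 + n2))"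
      by (rule tApp'[OF n1(1) n2(1)]) (auto simp: ctx_defs fun_eq_iff E(1) ac_simps)
    then show "\<exists>n'. tj cb (cadd (cdrop k (cadd G D)) E) (subst k v (App t u)) T n' \<and> n' + size (cadd G D k) = Suc (n + m) + p"
      using n1(2) n2(2) E(2) by (auto simp: cadd_def)
  qed
next
  case (sNil u)
  show ?case
  proof (intro allI impI)
    fix k and v :: "'c lterm" and E p assume h: "tjs cb E v (cempty k) p"
    then have "E = cempty" "p = 0" by (auto simp: cempty_def tjs_empty_iff)
    then show "\<exists>n'. tjs cb (cadd (cdrop k cempty) E) (subst k v u) {#} n' \<and> n' + size (cempty k) = 0 + p"
      by (auto intro!: sNil' simp: ctx_defs fun_eq_iff)
  qed
next
  case (sCons G u M n D T m)
  show ?case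
  proof (intro allI impI)
    fix k and v :: "'c lterm" and E p assume h: "tjs cb E v (cadd G D k) p"
    then obtain E1 E2 p1 p2 where E: "E = cadd E1 E2" "p = p1 + p2" "tjs cb E1 v (G k) p1" "tjs cb E2 v (D k) p2"
      using tjs_split by (fastforce simp: cadd_def)
    from sCons(2) E(3) obtain n1 where n1: "tjs cb (cadd (cdrop k G) E1) (subst k v u) M n1" "n1 + size (G k) = n + p1" by blast
    from sCons(4) E(4) obtain n2 where n2: "tj cb (cadd (cdrop k D) E2) (subst k v u) T n2" "n2 + size (D k) = m + p2" by blast
    have "tjs cb (cadd (cdrop k (cadd G D)) E) (subst k v u) (add_mset T M) (n1 + n2)"
      by (rule sCons'[OF n1(1) n2(1)]) (auto simp: ctx_defs fun_eq_iff E(1) ac_simps)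
    then show "\<exists>n'. tjs cb (cadd (cdrop k (cadd G D)) E) (subst k v u) (add_mset T M) n' \<and> n' + size (cadd G D k) = n + m + p"
      using n1(2) n2(2) E(2) by (auto simp: cadd_def)
  qed
qed


lemma unsubst_var:
  assumes "tj cb G v T n"
  shows "\<exists>G1 E n1 p. G = cadd (cdrop k G1) E \<and> tj cb G1 (Var k) T n1 \<and> tjs cb E v (G1 k) p"
proof -
  have "tj cb (csing k T) (Var k) T 1" by (rule tVar)
  moreover have "tjs cb G v (csing k T k) n" using tj_tjs_single[OF assms] by (simp add: csing_def)
  moreover have "G = cadd (cdrop k (csing k T)) G" by (auto simp: ctx_defs fun_eq_iff)
  ultimately show ?thesis by blast
qed

lemma tj_unsubst:
  fixes cb :: 'c
  shows "tj cb G s T n \<Longrightarrow> (\<forall>k (v::'c lterm) b. s = subst k v b \<longrightarrow>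
            (\<exists>G1 E n1 p. G = cadd (cdrop k G1) E \<and> tj cb G1 b T n1 \<and> tjs cb E v (G1 k) p))"
    and "tjs cb G s M n \<Longrightarrow> (\<forall>k (v::'c lterm) b. s = subst k v b \<longrightarrow>
            (\<exists>G1 E n1 p. G = cadd (cdrop k G1) E \<and> tjs cb G1 b M n1 \<and> tjs cb E v (G1 k) p))"
proof (induct rule: tj_tjs.inducts)
  case (tVar x T)
  show ?case
  proof (intro allI impI)
    fix k and v :: "'c lterm" and b assume e: "Var x = subst k v b"
    show "\<exists>G1 E n1 p. csing x T = cadd (cdrop k G1) E \<and> tj cb G1 b T n1 \<and> tjs cb E v (G1 k) p"
    proof (cases "b = Var k")
      case True
      then show ?thesis using e unsubst_var[OF tj_tjs.tVar[of cb x T]] by auto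
    next
      case False
      then obtain j where b: "b = Var j" "j \<noteq> k" "x = (if j < k then j else j - 1)" using e by (cases b) auto
      have "tj cb (csing j T) (Var j) T 1" by (rule tj_tjs.tVar)
      moreover have "tjs cb cempty v (csing j T k) 0" using b by (auto simp: csing_def tjs_empty_iff)
      moreover have "csing x T = cadd (cdrop k (csing j T)) cempty" using b by (auto simp: ctx_defs fun_eq_iff)
      ultimately show ?thesis using b by blast
    qed
  qed
next
  case (tCst c T)
  show ?case
  proof (intro allI impI)
    fix k and v :: "'c lterm" and b assume e: "Cst c = subst k v b"
    show "\<exists>G1 E n1 p. cempty = cadd (cdrop k G1) E \<and> tj cb G1 b T n1 \<and> tjs cb E v (G1 k) p"
    proof (cases "b = Var k")
      case True
      then show ?thesis using e unsubst_var[OF tj_tjs.tCst[OF tCst]] by auto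
    next
      case False
      then have b: "b = Cst c" using e by (cases b) (auto split: if_splits)
      have "tj cb cempty (Cst c) T 1" by (rule tj_tjs.tCst[OF tCst])
      moreover have "tjs cb cempty v (cempty k) 0" by (simp add: tjs_empty_iff cempty_def)
      moreover have "cempty = cadd (cdrop k cempty) cempty" by (auto simp: ctx_defs fun_eq_iff)
      ultimately show ?thesis using b by blast
    qed
  qed
next
  case (tLam G t T n)
  show ?case
  proof (intro allI impI)
    fix k and v :: "'c lterm" and b assume e: "Lam t = subst k v b"
    show "\<exists>G1 E n1 p. ctl G = cadd (cdrop k G1) E \<and> tj cb G1 b (Arr (G 0) T) n1 \<and> tjs cb E v (G1 k) p"
    proof (cases "b = Var k")
      case True
      then show ?thesis using e unsubst_var[OF tj_tjs.tLam[OF tLam(1)]] by auto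
    next
      case False
      then obtain b' where b: "b = Lam b'" "t = subst (Suc k) (lift 0 v) b'" using e by (cases b) (auto split: if_splits)
      with tLam(2) obtain G1 E n1 p where h: "G = cadd (cdrop (Suc k) G1) E" "tj cb G1 b' T n1" "tjs cb E (lift 0 v) (G1 (Suc k)) p"
        by blast
      from tj_unlift(2)[OF h(3)] have u: "E 0 = {#}" "tjs cb (cdrop 0 E) v (G1 (Suc k)) p" by auto
      have "tj cb (ctl G1) (Lam b') (Arr (G 0) T) (Suc n1)"
        by (rule tLam'[OF h(2)]) (use h(1) u(1) in \<open>auto simp: ctx_defs\<close>)
      moreover have "ctl G = cadd (cdrop k (ctl G1)) (cdrop 0 E)" using h(1) by (auto simp: ctx_defs fun_eq_iff)
      moreover have "tjs cb (cdrop 0 E) v (ctl G1 k) p" using u by (simp add: ctl_def)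
      ultimately show ?thesis using b by blast
    qed
  qed
next
  case (tApp G t M T n D u m)
  show ?case
  proof (intro allI impI)
    fix k and v :: "'c lterm" and b assume e: "App t u = subst k v b"
    show "\<exists>G1 E n1 p. cadd G D = cadd (cdrop k G1) E \<and> tj cb G1 b T n1 \<and> tjs cb E v (G1 k) p"
    proof (cases "b = Var k")
      case True
      then show ?thesis using e unsubst_var[OF tj_tjs.tApp[OF tApp(1,3)]] by auto
    next
      case False
      then obtain b1 b2 where b: "b = App b1 b2" "t = subst k v b1" "u = subst k v b2" using e by (cases b) (auto split: if_splits)
      with tApp(2) obtain G1 E1 n1 p1 where h1: "G = cadd (cdrop k G1) E1" "tj cb G1 b1 (Arr M T) n1" "tjs cb E1 v (G1 k) p1"
        by blast
      from b tApp(4) obtain G2 E2 n2 p2 where h2: "D = cadd (cdrop k G2) E2" "tjs cb G2 b2 M n2" "tjs cb E2 v (G2 k) p2"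
        by blast
      have "tj cb (cadd G1 G2) (App b1 b2) T (Suc (n1 + n2))" by (rule tj_tjs.tApp[OF h1(2) h2(2)])
      moreover have "tjs cb (cadd E1 E2) v (cadd G1 G2 k) (p1 + p2)" using tjs_union[OF h1(3) h2(3)] by (simp add: cadd_def)
      moreover have "cadd G D = cadd (cdrop k (cadd G1 G2)) (cadd E1 E2)" using h1(1) h2(1) by (auto simp: ctx_defs fun_eq_iff ac_simps)
      ultimately show ?thesis using b by blast
    qed
  qed
next
  case (sNil u)
  show ?case
  proof (intro allI impI)
    fix k and v :: "'c lterm" and b assume e: "u = subst k v b"
    have "tjs cb cempty b {#} 0" by (rule tj_tjs.sNil)
    moreover have "tjs cb cempty v (cempty k) 0" by (simp add: tjs_empty_iff cempty_def)
    moreover have "cempty = cadd (cdrop k cempty) cempty" by (auto simp: ctx_defs fun_eq_iff)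
    ultimately show "\<exists>G1 E n1 p. cempty = cadd (cdrop k G1) E \<and> tjs cb G1 b {#} n1 \<and> tjs cb E v (G1 k) p" by blast
  qed
next
  case (sCons G u M n D T m)
  show ?case
  proof (intro allI impI)
    fix k and v :: "'c lterm" and b assume e: "u = subst k v b"
    with sCons(2) obtain G1 E1 n1 p1 where h1: "G = cadd (cdrop k G1) E1" "tjs cb G1 b M n1" "tjs cb E1 v (G1 k) p1"
      by blast
    from e sCons(4) obtain G2 E2 n2 p2 where h2: "D = cadd (cdrop k G2) E2" "tj cb G2 b T n2" "tjs cb E2 v (G2 k) p2"
      by blast
    have "tjs cb (cadd G1 G2) b (add_mset T M) (n1 + n2)" by (rule tj_tjs.sCons[OF h1(2) h2(2)])
    moreover have "tjs cb (cadd E1 E2) v (cadd G1 G2 k) (p1 + p2)" using tjs_union[OF h1(3) h2(3)] by (simp add: cadd_def)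
    moreover have "cadd G D = cadd (cdrop k (cadd G1 G2)) (cadd E1 E2)" using h1(1) h2(1) by (auto simp: ctx_defs fun_eq_iff ac_simps)
    ultimately show "\<exists>G1 E n1 p. cadd G D = cadd (cdrop k G1) E \<and> tjs cb G1 b (add_mset T M) n1 \<and> tjs cb E v (G1 k) p" by blast
  qed
qed

lemma tjs_map_aux:
  shows "tj cb G t T n \<Longrightarrow> True"
    and "tjs cb G u M n \<Longrightarrow> (\<forall>G T k. k \<le> n \<longrightarrow> tj cb G u T k \<longrightarrow> (\<exists>k'\<le>k. tj cb G u' T k')) \<longrightarrow> (\<exists>n'\<le>n. tjs cb G u' M n')"
proof (induct rule: tj_tjs.inducts)
  case (sNil u)
  have "tjs cb cempty u' {#} 0" by (rule tj_tjs.sNil)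
  then show ?case by auto
next
  case (sCons G u M n D T m)
  show ?case
  proof
    assume a: "\<forall>G T k. k \<le> n + m \<longrightarrow> tj cb G u T k \<longrightarrow> (\<exists>k'\<le>k. tj cb G u' T k')"
    have "\<forall>G T k. k \<le> n \<longrightarrow> tj cb G u T k \<longrightarrow> (\<exists>k'\<le>k. tj cb G u' T k')"
    proof (intro allI impI)
      fix G T k assume "k \<le> n" "tj cb G u T k"
      then show "\<exists>k'\<le>k. tj cb G u' T k'" using a[rule_format, of k G T] by simp
    qed
    then obtain n' where n': "n' \<le> n" "tjs cb G u' M n'" using sCons(2) by blast
    obtain m' where m': "m' \<le> m" "tj cb D u' T m'" using a[rule_format, of m D T] sCons(3) by auto
    show "\<exists>n'\<le>n + m. tjs cb (cadd G D) u' (add_mset T M) n'"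
      using tj_tjs.sCons[OF n'(2) m'(2)] n'(1) m'(1) by (intro exI[of _ "n' + m'"]) auto
  qed
qed auto

lemma tjs_map_le: "tjs cb G u M n \<Longrightarrow> (\<And>G T k. k \<le> n \<Longrightarrow> tj cb G u T k \<Longrightarrow> (\<exists>k'\<le>k. tj cb G u' T k')) \<Longrightarrow> (\<exists>n'\<le>n. tjs cb G u' M n')"
  using tjs_map_aux(2)[of cb G u M n u'] by blast

lemma tjs_map_ex_aux:
  shows "tj cb G t T n \<Longrightarrow> True"
    and "tjs cb G u M n \<Longrightarrow> (\<forall>G T k. k \<le> n \<longrightarrow> tj cb G u T k \<longrightarrow> (\<exists>k'. tj cb G u' T k')) \<longrightarrow> (\<exists>n'. tjs cb G u' M n')"
proof (induct rule: tj_tjs.inducts)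
  case (sNil u)
  have "tjs cb cempty u' {#} 0" by (rule tj_tjs.sNil)
  then show ?case by auto
next
  case (sCons G u M n D T m)
  show ?case
  proof
    assume a: "\<forall>G T k. k \<le> n + m \<longrightarrow> tj cb G u T k \<longrightarrow> (\<exists>k'. tj cb G u' T k')"
    have "\<forall>G T k. k \<le> n \<longrightarrow> tj cb G u T k \<longrightarrow> (\<exists>k'. tj cb G u' T k')"
    proof (intro allI impI)
      fix G T k assume "k \<le> n" "tj cb G u T k"
      then show "\<exists>k'. tj cb G u' T k'" using a[rule_format, of k G T] by simp
    qed
    then obtain n' where n': "tjs cb G u' M n'" using sCons(2) by blast
    obtain m' where m': "tj cb D u' T m'" using a[rule_format, of m D T] sCons(3) by auto
    show "\<exists>n'. tjs cb (cadd G D) u' (add_mset T M) n'"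
      using tj_tjs.sCons[OF n' m'] by blast
  qed
qed auto

lemma tjs_map_ex: "tjs cb G u M n \<Longrightarrow> (\<And>G T k. k \<le> n \<Longrightarrow> tj cb G u T k \<Longrightarrow> (\<exists>k'. tj cb G u' T k')) \<Longrightarrow> (\<exists>n'. tjs cb G u' M n')"
  using tjs_map_ex_aux(2)[of cb G u M n u'] by blast

lemma root_red:
  assumes "tj cb G (App (Lam s) t) T n"
  shows "\<exists>n'<n. tj cb G (subst 0 t s) T n'"
proof -
  from assms obtain G1 D M n1 m where a: "G = cadd G1 D" "tj cb G1 (Lam s) (Arr M T) n1" "tjs cb D t M m" "n = Suc (n1 + m)"
    by (auto elim: tj_AppE)
  from a(2) obtain G' n0 where b: "G1 = ctl G'" "M = G' 0" "tj cb G' s T n0" "n1 = Suc n0"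
    by (auto elim: tj_LamE)
  from tj_subst(1)[OF b(3)] a(3) b(2) obtain n' where
    c: "tj cb (cadd (cdrop 0 G') D) (subst 0 t s) T n'" "n' + size (G' 0) = n0 + m" by blast
  have "cdrop 0 G' = G1" using b(1) by (auto simp: ctx_defs fun_eq_iff)
  then show ?thesis using c a b by (intro exI[of _ n']) auto
qed

lemma subject_red:
  fixes cb :: 'c
  shows "beta t t' \<Longrightarrow> (\<forall>G T n. tj cb G t T n \<longrightarrow> (\<exists>n'\<le>n. tj cb G t' T n'))"
proof (induct rule: beta.induct)
  case (root s t)
  then show ?case using root_red by (metis less_imp_le)
next
  case (appL s s' t)
  show ?case
  proof (intro allI impI)
    fix G T n assume "tj cb G (App s t) T n"
    then obtain G1 D M n1 m where a: "G = cadd G1 D" "tj cb G1 s (Arr M T) n1" "tjs cb D t M m" "n = Suc (n1 + m)"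
      by (auto elim: tj_AppE)
    with appL(2) obtain n1' where "n1' \<le> n1" "tj cb G1 s' (Arr M T) n1'" by blast
    then show "\<exists>n'\<le>n. tj cb G (App s' t) T n'" using tj_tjs.tApp[of cb G1 s' M T n1' D t m] a by (intro exI[of _ "Suc (n1' + m)"]) auto
  qed
next
  case (appR s s' t)
  show ?case
  proof (intro allI impI)
    fix G T n assume "tj cb G (App t s) T n"
    then obtain G1 D M n1 m where a: "G = cadd G1 D" "tj cb G1 t (Arr M T) n1" "tjs cb D s M m" "n = Suc (n1 + m)"
      by (auto elim: tj_AppE)
    from tjs_map_le[OF a(3), of s'] appR(2) obtain m' where "m' \<le> m" "tjs cb D s' M m'" by blast
    then show "\<exists>n'\<le>n. tj cb G (App t s') T n'" using tj_tjs.tApp[of cb G1 t M T n1 D s' m'] a by (intro exI[of _ "Suc (n1 + m')"]) auto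
  qed
next
  case (lam s s')
  show ?case
  proof (intro allI impI)
    fix G T n assume "tj cb G (Lam s) T n"
    then obtain G' T' n0 where a: "G = ctl G'" "T = Arr (G' 0) T'" "tj cb G' s T' n0" "n = Suc n0"
      by (auto elim: tj_LamE)
    with lam(2) obtain n0' where "n0' \<le> n0" "tj cb G' s' T' n0'" by blast
    then show "\<exists>n'\<le>n. tj cb G (Lam s') T n'" using tj_tjs.tLam[of cb G' s' T' n0'] a by (intro exI[of _ "Suc n0'"]) auto
  qed
qed

lemma subject_red_star:
  assumes "beta_star t t'" "tj cb G t T n"
  shows "\<exists>n'\<le>n. tj cb G t' T n'"
  using assms(1)
proof (induct rule: rtranclp_induct)
  case base then show ?case using assms(2) by blast
next
  case (step y z)
  then obtain n1 where "n1 \<le> n" "tj cb G y T n1" by blast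
  with subject_red[OF step(2)] show ?case by (meson order_trans)
qed

lemma subject_exp:
  fixes cb :: 'c
  shows "beta t t' \<Longrightarrow> (\<forall>G T n. tj cb G t' T n \<longrightarrow> (\<exists>n'. tj cb G t T n'))"
proof (induct rule: beta.induct)
  case (root s t)
  show ?case
  proof (intro allI impI)
    fix G T n assume "tj cb G (subst 0 t s) T n"
    from tj_unsubst(1)[OF this] obtain G1 E n1 p where
      h: "G = cadd (cdrop 0 G1) E" "tj cb G1 s T n1" "tjs cb E t (G1 0) p" by blast
    have "tj cb (ctl G1) (Lam s) (Arr (G1 0) T) (Suc n1)" by (rule tj_tjs.tLam[OF h(2)])
    from tj_tjs.tApp[OF this h(3)] show "\<exists>n'. tj cb G (App (Lam s) t) T n'"
      using h(1) by (auto simp: ctx_defs)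
  qed
next
  case (appL s s' t)
  show ?case
  proof (intro allI impI)
    fix G T n assume "tj cb G (App s' t) T n"
    then obtain G1 D M n1 m where a: "G = cadd G1 D" "tj cb G1 s' (Arr M T) n1" "tjs cb D t M m" "n = Suc (n1 + m)"
      by (auto elim: tj_AppE)
    with appL(2) obtain n1' where "tj cb G1 s (Arr M T) n1'" by blast
    then show "\<exists>n'. tj cb G (App s t) T n'" using tj_tjs.tApp[of cb G1 s M T n1' D t m] a by fastforce
  qed
next
  case (appR s s' t)
  show ?case
  proof (intro allI impI)
    fix G T n assume "tj cb G (App t s') T n"
    then obtain G1 D M n1 m where a: "G = cadd G1 D" "tj cb G1 t (Arr M T) n1" "tjs cb D s' M m" "n = Suc (n1 + m)"
      by (auto elim: tj_AppE)
    from tjs_map_ex[OF a(3), of s] appR(2) obtain m' where "tjs cb D s M m'" by blast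
    then show "\<exists>n'. tj cb G (App t s) T n'" using tj_tjs.tApp[of cb G1 t M T n1 D s m'] a by fastforce
  qed
next
  case (lam s s')
  show ?case
  proof (intro allI impI)
    fix G T n assume "tj cb G (Lam s') T n"
    then obtain G' T' n0 where a: "G = ctl G'" "T = Arr (G' 0) T'" "tj cb G' s' T' n0" "n = Suc n0"
      by (auto elim: tj_LamE)
    with lam(2) obtain n0' where "tj cb G' s T' n0'" by blast
    then show "\<exists>n'. tj cb G (Lam s) T n'" using tj_tjs.tLam[of cb G' s T' n0'] a by fastforce
  qed
qed

lemma subject_exp_star:
  assumes "beta_star t t'" "tj cb G t' T n"
  shows "\<exists>n'. tj cb G t T n'"
  using assms(1,2)
proof (induct arbitrary: n rule: converse_rtranclp_induct)
  case base then show ?case by blast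
next
  case (step y z)
  then obtain n1 where "tj cb G z T n1" by blast
  with subject_exp[OF step(1)] show ?case by blast
qed


lemma tj_inf:
  fixes cb :: 'c
  shows "\<forall>G (t::'c lterm) T s. tj cb G t T n \<longrightarrow> beta_inf t s \<longrightarrow> (\<exists>n'. tj cb G s T n')"
proof (induct n rule: less_induct)
  case (less n)
  show ?case
  proof (intro allI impI)
    fix G and t :: "'c lterm" and T s assume ty: "tj cb G t T n" and bi: "beta_inf t s"
    from bi show "\<exists>n'. tj cb G s T n'"
    proof (cases rule: beta_inf.cases)
      case atom
      then show ?thesis using subject_red_star[OF _ ty] by blast
    next
      case (app t1 t2 t1' t2')
      from subject_red_star[OF app(2) ty] obtain n0 where n0: "n0 \<le> n" "tj cb G (App t1 t2) T n0" by blast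
      from n0(2) obtain G1 D M n1 m where a: "G = cadd G1 D" "tj cb G1 t1 (Arr M T) n1" "tjs cb D t2 M m" "n0 = Suc (n1 + m)"
        by (auto elim: tj_AppE)
      have "n1 < n" using n0 a by simp
      with less a(2) app(3) obtain n1' where h1: "tj cb G1 t1' (Arr M T) n1'" by blast
      have "\<exists>m'. tjs cb D t2' M m'"
      proof (rule tjs_map_ex[OF a(3)])
        fix G' T' k assume "k \<le> m" "tj cb G' t2 T' k"
        moreover have "k < n" using \<open>k \<le> m\<close> n0 a by simp
        ultimately show "\<exists>k'. tj cb G' t2' T' k'" using less app(4) by blast
      qed
      then obtain m' where "tjs cb D t2' M m'" by blast
      from tj_tjs.tApp[OF h1 this] show ?thesis using a(1) app(1) by blast
    next
      case (lam r r')
      from subject_red_star[OF lam(2) ty] obtain n0 where n0: "n0 \<le> n" "tj cb G (Lam r) T n0" by blast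
      from n0(2) obtain G' T' n1 where a: "G = ctl G'" "T = Arr (G' 0) T'" "tj cb G' r T' n1" "n0 = Suc n1"
        by (auto elim: tj_LamE)
      have "n1 < n" using n0 a by simp
      with less a(3) lam(3) obtain n1' where "tj cb G' r' T' n1'" by blast
      from tj_tjs.tLam[OF this] show ?thesis using a lam(1) by blast
    qed
  qed
qed

lemma star_appL: "beta_star s s' \<Longrightarrow> beta_star (App s t) (App s' t)"
  by (induct rule: rtranclp_induct) (auto intro: rtranclp.rtrancl_into_rtrancl beta.appL)

lemma star_lam: "beta_star s s' \<Longrightarrow> beta_star (Lam s) (Lam s')"
  by (induct rule: rtranclp_induct) (auto intro: rtranclp.rtrancl_into_rtrancl beta.lam)

lemma lams_0[simp]: "lams 0 x = x" by (simp add: lams_def)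
lemma lams_Suc: "lams (Suc m) x = Lam (lams m x)" by (simp add: lams_def)
lemma apps_Nil[simp]: "apps a [] = a" by (simp add: apps_def)
lemma apps_snoc: "apps a (ts @ [t]) = App (apps a ts) t" by (simp add: apps_def)

lemma tj_hnf:
  fixes cb :: 'c
  shows "\<forall>G (t::'c lterm) T. tj cb G t T n \<longrightarrow> has_hnf cb t"
proof (induct n rule: less_induct)
  case (less n)
  show ?case
  proof (intro allI impI)
    fix G and t :: "'c lterm" and T assume ty: "tj cb G t T n"
    show "has_hnf cb t"
    proof (cases t)
      case (Cst c)
      then have "c \<noteq> cb" using ty by (auto elim: tj_CstE)
      then have "hnf cb t" unfolding hnf_def using Cst
        by (intro exI[of _ 0] exI[of _ "Cst c"] exI[of _ "[]"]) (auto simp: is_atom_def)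
      then show ?thesis unfolding has_hnf_def by blast
    next
      case (Var x)
      then have "hnf cb t" unfolding hnf_def
        by (intro exI[of _ 0] exI[of _ "Var x"] exI[of _ "[]"]) (auto simp: is_atom_def)
      then show ?thesis unfolding has_hnf_def by blast
    next
      case (Lam t')
      from ty obtain G' T' n0 where a: "tj cb G' t' T' n0" "n = Suc n0" using Lam by (auto elim: tj_LamE)
      with less have "has_hnf cb t'" by blast
      then obtain m a ts h where h: "beta_star t' h" "h = lams m (apps a ts)" "is_atom a" "a \<noteq> Cst cb"
        unfolding has_hnf_def hnf_def by blast
      have "beta_star t (lams (Suc m) (apps a ts))" using star_lam[OF h(1)] h(2) Lam by (simp add: lams_Suc)
      moreover have "hnf cb (lams (Suc m) (apps a ts))" using h unfolding hnf_def by blast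
      ultimately show ?thesis unfolding has_hnf_def by blast
    next
      case (App t1 t2)
      from ty obtain G1 D M n1 m where a: "G = cadd G1 D" "tj cb G1 t1 (Arr M T) n1" "tjs cb D t2 M m" "n = Suc (n1 + m)"
        using App by (auto elim: tj_AppE)
      with less have "has_hnf cb t1" by (metis less_add_Suc1)
      then obtain k b ts h where h: "beta_star t1 h" "h = lams k (apps b ts)" "is_atom b" "b \<noteq> Cst cb"
        unfolding has_hnf_def hnf_def by blast
      have st: "beta_star t (App h t2)" using star_appL[OF h(1)] App by simp
      show ?thesis
      proof (cases k)
        case 0
        then have "App h t2 = lams 0 (apps b (ts @ [t2]))" using h(2) by (simp add: apps_snoc)
        then have "hnf cb (App h t2)" using h unfolding hnf_def by blast
        then show ?thesis using st unfolding has_hnf_def by blast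
      next
        case (Suc k')
        define h' where "h' = lams k' (apps b ts)"
        have hh: "h = Lam h'" using h(2) Suc by (simp add: lams_Suc h'_def)
        from subject_red_star[OF st ty] hh obtain n2 where n2: "n2 \<le> n" "tj cb G (App (Lam h') t2) T n2" by auto
        from root_red[OF n2(2)] obtain n3 where n3: "n3 < n2" "tj cb G (subst 0 t2 h') T n3" by blast
        with less n2 have "has_hnf cb (subst 0 t2 h')" by (meson order_less_le_trans)
        then obtain r where r: "beta_star (subst 0 t2 h') r" "hnf cb r" unfolding has_hnf_def by blast
        have "beta_star t (subst 0 t2 h')"
          using st hh by (meson beta.root rtranclp.rtrancl_into_rtrancl)
        then show ?thesis using r unfolding has_hnf_def by (meson rtranclp_trans)
      qed
    qed
  qed
qed

definition arrs :: "nat \<Rightarrow> ty" where "arrs k = (Arr {#} ^^ k) Base"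

lemma arrs_Suc: "arrs (Suc j) = Arr {#} (arrs j)" by (simp add: arrs_def)

lemma apps_tj: "\<forall>j n. tj cb G a (arrs (length ts + j)) n \<longrightarrow> tj cb G (apps a ts) (arrs j) (n + length ts)"
proof (induct ts rule: rev_induct)
  case Nil then show ?case by simp
next
  case (snoc x ts)
  show ?case
  proof (intro allI impI)
    fix j n assume "tj cb G a (arrs (length (ts @ [x]) + j)) n"
    then have "tj cb G a (arrs (length ts + Suc j)) n" by simp
    with snoc have "tj cb G (apps a ts) (Arr {#} (arrs j)) (n + length ts)" by (metis arrs_Suc)
    from tj_tjs.tApp[OF this tj_tjs.sNil[of cb x]]
    show "tj cb G (apps a (ts @ [x])) (arrs j) (n + length (ts @ [x]))" by (simp add: apps_snoc)
  qed
qed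

lemma lams_tj: "tj cb G x T n \<Longrightarrow> \<exists>G T n. tj cb G (lams m x) T n"
proof (induct m)
  case 0 then show ?case by auto
next
  case (Suc m)
  then obtain G T n where "tj cb G (lams m x) T n" by blast
  from tj_tjs.tLam[OF this] show ?case by (auto simp: lams_Suc)
qed

lemma hnf_tj: assumes "hnf cb h" shows "\<exists>G T n. tj cb G h T n"
proof -
  from assms obtain m a ts where h: "h = lams m (apps a ts)" "is_atom a" "a \<noteq> Cst cb" unfolding hnf_def by blast
  have "\<exists>G. tj cb G a (arrs (length ts + 0)) 1"
  proof -
    from h(2) consider x where "a = Var x" | c where "a = Cst c" unfolding is_atom_def by blast
    then show ?thesis
    proof cases
      case 1 then show ?thesis using tj_tjs.tVar[of cb x "arrs (length ts + 0)"] by auto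
    next
      case 2 then show ?thesis using h(3) tj_tjs.tCst[of c cb "arrs (length ts + 0)"] by auto
    qed
  qed
  then obtain G where "tj cb G a (arrs (length ts + 0)) 1" by blast
  then have "tj cb G (apps a ts) (arrs 0) (1 + length ts)" using apps_tj[of cb G a ts] by blast
  from lams_tj[OF this, of m] h(1) show ?thesis by simp
qed

theorem lemma5p20:
  fixes cbot :: 'c and t s :: "'c lterm"
  assumes "beta_inf t s" and "has_hnf cbot t"
  shows "has_hnf cbot s"
proof -
  from assms(2) obtain h where h: "beta_star t h" "hnf cbot h" unfolding has_hnf_def by blast
  from hnf_tj[OF h(2)] obtain G T n where "tj cbot G h T n" by blast
  from subject_exp_star[OF h(1) this] obtain n1 where "tj cbot G t T n1" by blast
  then obtain n2 where "tj cbot G s T n2" using tj_inf[of cbot n1, rule_format, OF _ assms(1)] by blast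
  then show ?thesis using tj_hnf[of cbot n2, rule_format] by blast
qed

end
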